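(* Let $S^{\max}$, $L$, $\mathcal{C}$ and $\mathcal{O}$ be as in the context. For all $\sigma,\sigma'\in\mathbb{T}$ with $\sigma\preceq\sigma'$, we have $\mathcal{O}(\sigma)\supseteq\mathcal{O}(\sigma')$.
   Context: Let $E$ be a set of events. A trace is a finite sequence $\sigma=\sigma_0\cdots\sigma_{n-1}$ ($n\ge 0$) or an infinite sequence $\sigma_0\sigma_1\cdots$ of events; $|\sigma|$ is its length ($\infty$ if infinite) and $\mathbb{T}$ is the set of all traces (including the empty trace). Write $\sigma\preceq\sigma'$ iff $|\sigma|\le|\sigma'|$ and $\sigma_i=\sigma'_i$ for all $0\le i<|\sigma|$ (prefix order). For a finite trace $\sigma$, $\sigma\sigma'$ denotes concatenation. For $P\subseteq\mathbb{T}$, $\mathrm{pf}(P)=\{\sigma'\in\mathbb{T}\mid\exists\sigma\in P.\ \sigma'\preceq\sigma\}$. Fix $S^{\max}\subseteq\mathbb{T}$ and let $S^{\mathrm{pf}}=\mathrm{pf}(S^{\max})$ (valid traces). For $P\subseteq\mathbb{T}$, $\alpha(P)=\{\sigma\in\mathrm{pf}(P)\mid\forall\sigma'\in S^{\max}.\ \sigma\preceq\sigma'\Rightarrow\sigma'\in P\}$. Let $L\subseteq\wp(S^{\max})$ with $S^{\max},\emptyset\in L$ be such that $(L,\subseteq)$ is a complete lattice with top $S^{\max}$, bottom $\emptyset$, join $\sqcup$ and meet $\sqcap$ (least upper bounds / greatest lower bounds in $L$ w.r.t. $\subseteq$, not necessarily $\cup,\cap$). The inquiry function is $\mathcal{I}(\sigma)=\sqcap\{P\in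 L\mid \sigma\in\alpha(P)\}$ for $\sigma\in S^{\mathrm{pf}}$, and $\mathcal{I}(\sigma)=\emptyset$ for $\sigma\notin S^{\mathrm{pf}}$. A cognizance function is a map $\mathcal{C}:\mathbb{T}\to\wp(\mathbb{T})$ that is extensive ($\sigma\in\mathcal{C}(\sigma)$ for all $\sigma$), satisfies $\mathcal{C}(\sigma\sigma')=\{\tau\tau'\mid\tau\in\mathcal{C}(\sigma),\tau'\in\mathcal{C}(\sigma')\}$ for all $\sigma,\sigma'$, and satisfies $\sigma\notin S^{\mathrm{pf}}\Rightarrow\mathcal{C}(\sigma)\cap S^{\mathrm{pf}}=\emptyset$. The observation function is $\mathcal{O}(\sigma)=\sqcup\{\mathcal{I}(\sigma')\mid\sigma'\in\mathcal{C}(\sigma)\}$. *)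

theory Defs
  imports Main "HOL-Library.Sublist"
begin

datatype 'e trace = Fin "'e list" | Inf "nat \<Rightarrow> 'e"

fun tprefix :: "'e trace \<Rightarrow> 'e trace \<Rightarrow> bool" (infix "\<preceq>\<^sub>t" 50) where
  "tprefix (Fin xs) (Fin ys) = prefix xs ys"
| "tprefix (Fin xs) (Inf f) = (xs = map f [0..<length xs])"
| "tprefix (Inf f) (Fin ys) = False"
| "tprefix (Inf f) (Inf g) = (f = g)"

text \<open>Concatenation; for an infinite first argument the result is that
  argument (the paper only concatenates after finite traces).\<close>
fun tconc :: "'e trace \<Rightarrow> 'e trace \<Rightarrow> 'e trace" where
  "tconc (Fin xs) (Fin ys) = Fin (xs @ ys)"
| "tconc (Fin xs) (Inf f) = Inf (\<lambda>i. if i < length xs then xs ! i else f (i - length xs))"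
| "tconc (Inf f) _ = Inf f"

definition pf :: "'e trace set \<Rightarrow> 'e trace set" where
  "pf P = {s'. \<exists>s\<in>P. s' \<preceq>\<^sub>t s}"

definition alpha :: "'e trace set \<Rightarrow> 'e trace set \<Rightarrow> 'e trace set" where
  "alpha Smax P = {s \<in> pf P. \<forall>s'\<in>Smax. s \<preceq>\<^sub>t s' \<longrightarrow> s' \<in> P}"

definition is_Llub :: "'a set set \<Rightarrow> 'a set set \<Rightarrow> 'a set \<Rightarrow> bool" where
  "is_Llub L A P \<longleftrightarrow> P \<in> L \<and> (\<forall>Q\<in>A. Q \<subseteq> P) \<and> (\<forall>R\<in>L. (\<forall>Q\<in>A. Q \<subseteq> R) \<longrightarrow> P \<subseteq> R)"

definition is_Lglb :: "'a set set \<Rightarrow> 'a set set \<Rightarrow> 'a set \<Rightarrow> bool" where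
  "is_Lglb L A P \<longleftrightarrow> P \<in> L \<and> (\<forall>Q\<in>A. P \<subseteq> Q) \<and> (\<forall>R\<in>L. (\<forall>Q\<in>A. R \<subseteq> Q) \<longrightarrow> R \<subseteq> P)"

definition Ljoin :: "'a set set \<Rightarrow> 'a set set \<Rightarrow> 'a set" where
  "Ljoin L A = (THE P. is_Llub L A P)"

definition Lmeet :: "'a set set \<Rightarrow> 'a set set \<Rightarrow> 'a set" where
  "Lmeet L A = (THE P. is_Lglb L A P)"

definition complete_sublattice :: "'e trace set \<Rightarrow> 'e trace set set \<Rightarrow> bool" where
  "complete_sublattice Smax L \<longleftrightarrow> L \<subseteq> Pow Smax \<and> Smax \<in> L \<and> {} \<in> L \<and>
     (\<forall>A \<subseteq> L. (\<exists>P. is_Llub L A P) \<and> (\<exists>P. is_Lglb L A P))"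

definition inquiry :: "'e trace set \<Rightarrow> 'e trace set set \<Rightarrow> 'e trace \<Rightarrow> 'e trace set" where
  "inquiry Smax L s = (if s \<in> pf Smax then Lmeet L {P \<in> L. s \<in> alpha Smax P} else {})"

definition cognizance :: "'e trace set \<Rightarrow> ('e trace \<Rightarrow> 'e trace set) \<Rightarrow> bool" where
  "cognizance Smax C \<longleftrightarrow>
     (\<forall>s. s \<in> C s) \<and>
     (\<forall>s s'. (\<exists>xs. s = Fin xs) \<longrightarrow> C (tconc s s') = {tconc t t' | t t'. t \<in> C s \<and> t' \<in> C s'}) \<and>
     (\<forall>s. s \<notin> pf Smax \<longrightarrow> C s \<inter> pf Smax = {})"

definition observation :: "'e trace set \<Rightarrow> 'e trace set set \<Rightarrow> ('e trace \<Rightarrow> 'e trace set) \<Rightarrow> 'e trace \<Rightarrow> 'e trace set" where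
  "observation Smax L C s = Ljoin L {inquiry Smax L s' | s'. s' \<in> C s}"

end

theory Submission
  imports Defs
begin

lemma tprefix_refl: "t \<preceq>\<^sub>t t"
  by (cases t) auto

lemma tprefix_trans: "a \<preceq>\<^sub>t b \<Longrightarrow> b \<preceq>\<^sub>t c \<Longrightarrow> a \<preceq>\<^sub>t c"
proof (cases a; cases b; cases c)
  fix xs ys g assume "a = Fin xs" "b = Fin ys" "c = Inf g" "a \<preceq>\<^sub>t b" "b \<preceq>\<^sub>t c"
  then have "prefix xs ys" "ys = map g [0..<length ys]" by auto
  then obtain zs where "ys = xs @ zs" by (auto simp: prefix_def)
  then have "xs = take (length xs) ys" by simp
  also have "\<dots> = map g [0..<length xs]" using \<open>ys = map g [0..<length ys]\<close> \<open>ys = xs @ zs\<close>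
  proof -
    have "take (length xs) ys = take (length xs) (map g [0..<length ys])"
      using \<open>ys = map g [0..<length ys]\<close> by simp
    also have "\<dots> = map g (take (length xs) [0..<length ys])" by (simp only: take_map)
    also have "\<dots> = map g [0..<length xs]" using \<open>ys = xs @ zs\<close> by simp
    finally show ?thesis .
  qed
  finally show ?thesis using \<open>a = Fin xs\<close> \<open>c = Inf g\<close> by simp
qed auto

lemma glb_unique:
  assumes "is_Lglb L A P" "is_Lglb L A Q" shows "P = Q"
proof -
  have "P \<in> L" "\<forall>X\<in>A. P \<subseteq> X" "\<forall>R\<in>L. (\<forall>X\<in>A. R \<subseteq> X) \<longrightarrow> R \<subseteq> P"
    using assms(1) unfolding is_Lglb_def by simp_all
  moreover have "Q \<in> L" "\<forall>X\<in>A. Q \<subseteq> X" "\<forall>R\<in>L. (\<forall>X\<in>A. R \<subseteq> X) \<longrightarrow> R \<subseteq> Q"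
    using assms(2) unfolding is_Lglb_def by simp_all
  ultimately have "P \<subseteq> Q" "Q \<subseteq> P" by simp_all
  then show ?thesis by (rule subset_antisym)
qed

lemma lub_unique:
  assumes "is_Llub L A P" "is_Llub L A Q" shows "P = Q"
proof -
  have "P \<in> L" "\<forall>X\<in>A. X \<subseteq> P" "\<forall>R\<in>L. (\<forall>X\<in>A. X \<subseteq> R) \<longrightarrow> P \<subseteq> R"
    using assms(1) unfolding is_Llub_def by simp_all
  moreover have "Q \<in> L" "\<forall>X\<in>A. X \<subseteq> Q" "\<forall>R\<in>L. (\<forall>X\<in>A. X \<subseteq> R) \<longrightarrow> Q \<subseteq> R"
    using assms(2) unfolding is_Llub_def by simp_all
  ultimately have "P \<subseteq> Q" "Q \<subseteq> P" by simp_all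
  then show ?thesis by (rule subset_antisym)
qed

lemma Lmeet_is:
  assumes "complete_sublattice Smax L" "A \<subseteq> L" shows "is_Lglb L A (Lmeet L A)"
proof -
  have "\<forall>A \<subseteq> L. (\<exists>P. is_Llub L A P) \<and> (\<exists>P. is_Lglb L A P)"
    using assms(1) unfolding complete_sublattice_def by (elim conjE)
  then have "\<exists>P. is_Lglb L A P" using assms(2) by simp
  then obtain P where P: "is_Lglb L A P" by (elim exE)
  have "Lmeet L A = P" unfolding Lmeet_def
  proof (rule the_equality)
    show "is_Lglb L A P" by (fact P)
    fix Q assume "is_Lglb L A Q" then show "Q = P" using P by (rule glb_unique)
  qed
  then show ?thesis using P by simp
qed

lemma Ljoin_is:
  assumes "complete_sublattice Smax L" "A \<subseteq> L" shows "is_Llub L A (Ljoin L A)"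
proof -
  have "\<forall>A \<subseteq> L. (\<exists>P. is_Llub L A P) \<and> (\<exists>P. is_Lglb L A P)"
    using assms(1) unfolding complete_sublattice_def by (elim conjE)
  then have "\<exists>P. is_Llub L A P" using assms(2) by simp
  then obtain P where P: "is_Llub L A P" by (elim exE)
  have "Ljoin L A = P" unfolding Ljoin_def
  proof (rule the_equality)
    show "is_Llub L A P" by (fact P)
    fix Q assume "is_Llub L A Q" then show "Q = P" using P by (rule lub_unique)
  qed
  then show ?thesis using P by simp
qed

lemma inquiry_in_L:
  assumes L: "complete_sublattice Smax L" shows "inquiry Smax L s \<in> L"
proof (cases "s \<in> pf Smax")
  case True
  have "{P \<in> L. s \<in> alpha Smax P} \<subseteq> L" by (rule subsetI) simp
  then have "is_Lglb L {P \<in> L. s \<in> alpha Smax P} (Lmeet L {P \<in> L. s \<in> alpha Smax P})"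
    by (rule Lmeet_is[OF L])
  then have "Lmeet L {P \<in> L. s \<in> alpha Smax P} \<in> L" unfolding is_Lglb_def by (elim conjE)
  then show ?thesis using True by (simp add: inquiry_def)
next
  case False
  have "{} \<in> L" using L unfolding complete_sublattice_def by (elim conjE)
  then show ?thesis using False by (simp add: inquiry_def)
qed

lemma pf_prefix:
  assumes "t' \<in> pf P" "t \<preceq>\<^sub>t t'" shows "t \<in> pf P"
proof -
  obtain x where "x \<in> P" "t' \<preceq>\<^sub>t x" using assms(1) unfolding pf_def by auto
  then have "t \<preceq>\<^sub>t x" using assms(2) tprefix_trans by metis
  then show ?thesis using \<open>x \<in> P\<close> unfolding pf_def by auto
qed

lemma alpha_mono:
  assumes p: "t \<preceq>\<^sub>t t'" and t': "t' \<in> pf Smax" and a: "t \<in> alpha Smax P"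
  shows "t' \<in> alpha Smax P"
proof -
  have up: "\<forall>x\<in>Smax. t \<preceq>\<^sub>t x \<longrightarrow> x \<in> P" using a unfolding alpha_def by simp
  obtain x where x: "x \<in> Smax" "t' \<preceq>\<^sub>t x" using t' unfolding pf_def by auto
  have "t \<preceq>\<^sub>t x" using p x(2) by (rule tprefix_trans)
  then have "x \<in> P" using up x(1) by simp
  then have "t' \<in> pf P" using x(2) unfolding pf_def by auto
  moreover have "\<forall>y\<in>Smax. t' \<preceq>\<^sub>t y \<longrightarrow> y \<in> P"
  proof (intro ballI impI)
    fix y assume "y \<in> Smax" "t' \<preceq>\<^sub>t y"
    then have "t \<preceq>\<^sub>t y" using p tprefix_trans by metis
    then show "y \<in> P" using up \<open>y \<in> Smax\<close> by simp
  qed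
  ultimately show ?thesis unfolding alpha_def by simp
qed

lemma inquiry_anti:
  assumes L: "complete_sublattice Smax L" and p: "t \<preceq>\<^sub>t t'"
  shows "inquiry Smax L t' \<subseteq> inquiry Smax L t"
proof (cases "t' \<in> pf Smax")
  case False then show ?thesis by (simp add: inquiry_def)
next
  case True
  then have t: "t \<in> pf Smax" using p by (rule pf_prefix)
  let ?A = "{P \<in> L. t \<in> alpha Smax P}" and ?B = "{P \<in> L. t' \<in> alpha Smax P}"
  have AB: "?A \<subseteq> ?B" using alpha_mono[OF p True] by auto
  have AL: "?A \<subseteq> L" and BL: "?B \<subseteq> L" by auto
  have gA: "is_Lglb L ?A (Lmeet L ?A)" using L AL by (rule Lmeet_is)
  have gB: "is_Lglb L ?B (Lmeet L ?B)" using L BL by (rule Lmeet_is)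
  have "Lmeet L ?B \<in> L" "\<forall>X\<in>?B. Lmeet L ?B \<subseteq> X" using gB unfolding is_Lglb_def by simp_all
  then have "\<forall>X\<in>?A. Lmeet L ?B \<subseteq> X" using AB by auto
  moreover have "\<forall>R\<in>L. (\<forall>X\<in>?A. R \<subseteq> X) \<longrightarrow> R \<subseteq> Lmeet L ?A" using gA unfolding is_Lglb_def by simp
  ultimately have "Lmeet L ?B \<subseteq> Lmeet L ?A" using \<open>Lmeet L ?B \<in> L\<close> by simp
  then show ?thesis using True t by (simp add: inquiry_def)
qed

lemma tprefix_tconc: "t \<preceq>\<^sub>t tconc t u"
  by (cases t; cases u) (auto intro: nth_equalityI)

lemma prefix_decomp:
  assumes "s \<preceq>\<^sub>t s'"
  shows "s = s' \<or> (\<exists>xs u. s = Fin xs \<and> s' = tconc (Fin xs) u)"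
proof (cases s; cases s')
  fix xs ys assume "s = Fin xs" "s' = Fin ys"
  with assms obtain zs where "ys = xs @ zs" by (auto simp: prefix_def)
  then show ?thesis using \<open>s = Fin xs\<close> \<open>s' = Fin ys\<close> by (metis tconc.simps(1))
next
  fix xs f assume a: "s = Fin xs" "s' = Inf f"
  with assms have xs: "xs = map f [0..<length xs]" by simp
  have "tconc (Fin xs) (Inf (\<lambda>i. f (i + length xs))) = Inf f"
  proof -
    have "(\<lambda>i. if i < length xs then xs ! i else f (i - length xs + length xs)) = f"
    proof
      fix i show "(if i < length xs then xs ! i else f (i - length xs + length xs)) = f i"
      proof (cases "i < length xs")
        case True
        then have "xs ! i = f i" using xs by (metis add_0 diff_zero nth_map_upt)
        then show ?thesis using True by simp
      qed simp
    qed
    then show ?thesis by simp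
  qed
  then show ?thesis using a by metis
qed (use assms in auto)

lemma cog_prefix:
  assumes C: "cognizance Smax C" and p: "s \<preceq>\<^sub>t s'" and t': "t' \<in> C s'"
  shows "\<exists>t\<in>C s. t \<preceq>\<^sub>t t'"
  using prefix_decomp[OF p]
proof
  assume "s = s'" then show ?thesis using t' tprefix_refl by blast
next
  assume "\<exists>xs u. s = Fin xs \<and> s' = tconc (Fin xs) u"
  then obtain xs u where e: "s = Fin xs" "s' = tconc (Fin xs) u" by blast
  then have "C s' = {tconc t t'' | t t''. t \<in> C s \<and> t'' \<in> C u}"
    using C unfolding cognizance_def by blast
  then obtain t t'' where "t' = tconc t t''" "t \<in> C s" using t' by blast
  then show ?thesis using tprefix_tconc by blast
qed

theorem lemma3:
  fixes Smax :: "'e trace set" and L :: "'e trace set set" and C :: "'e trace \<Rightarrow> 'e trace set"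
  assumes "complete_sublattice Smax L"
    and "cognizance Smax C"
    and "s \<preceq>\<^sub>t s'"
  shows "observation Smax L C s' \<subseteq> observation Smax L C s"
proof -
  let ?A = "{inquiry Smax L t | t. t \<in> C s'}" and ?B = "{inquiry Smax L t | t. t \<in> C s}"
  have AL: "?A \<subseteq> L"
  proof
    fix X assume "X \<in> ?A" then obtain t where "X = inquiry Smax L t" by blast
    then show "X \<in> L" using inquiry_in_L[OF assms(1)] by simp
  qed
  have BL: "?B \<subseteq> L"
  proof
    fix X assume "X \<in> ?B" then obtain t where "X = inquiry Smax L t" by blast
    then show "X \<in> L" using inquiry_in_L[OF assms(1)] by simp
  qed
  have gA: "is_Llub L ?A (Ljoin L ?A)" using assms(1) AL by (rule Ljoin_is)
  have gB: "is_Llub L ?B (Ljoin L ?B)" using assms(1) BL by (rule Ljoin_is)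
  have ubB: "\<forall>R\<in>?B. R \<subseteq> Ljoin L ?B" using gB unfolding is_Llub_def by simp
  have "\<forall>Q\<in>?A. Q \<subseteq> Ljoin L ?B"
  proof
    fix Q assume "Q \<in> ?A"
    then obtain t' where Q: "Q = inquiry Smax L t'" "t' \<in> C s'" by blast
    obtain t where t: "t \<in> C s" "t \<preceq>\<^sub>t t'" using cog_prefix[OF assms(2) assms(3) Q(2)] by (elim bexE)
    have "Q \<subseteq> inquiry Smax L t" using inquiry_anti[OF assms(1) t(2)] Q(1) by simp
    moreover have "inquiry Smax L t \<in> ?B" using t(1) by blast
    then have "inquiry Smax L t \<subseteq> Ljoin L ?B" using ubB by simp
    ultimately show "Q \<subseteq> Ljoin L ?B" by (rule subset_trans)
  qed
  moreover have "Ljoin L ?B \<in> L" using gB unfolding is_Llub_def by simp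
  moreover have "\<forall>R\<in>L. (\<forall>Q\<in>?A. Q \<subseteq> R) \<longrightarrow> Ljoin L ?A \<subseteq> R"
    using gA unfolding is_Llub_def by simp
  ultimately have "Ljoin L ?A \<subseteq> Ljoin L ?B" by simp
  then show ?thesis unfolding observation_def by simp
qed

end
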